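(* Let $\mathcal H$ be a complex Hilbert space and $A,B,X\in\mathcal B(\mathcal H)$ with $B\neq0$ and $X$ positive. Let $\{x_n\}\subset\mathcal H$ with $\|x_n\|=1$ and $w(AXB)=\lim_{n\to\infty}|\langle AXBx_n,x_n\rangle|$. Then $$w(AXB)\le\frac{\|X\|}{2}\left(\big\||A^*|^2+|B|^2\big\|-\lim_{n\to\infty}\frac{\|A^*x_n\|}{2\|Bx_n\|}\inf_{\lambda\in\mathbb C}\|(B-\lambda A^* )x_n\|^2\right)\le\frac{\|X\|}{2}\big\||A^*|^2+|B|^2\big\|$$ (the limit being assumed to exist). In particular, taking $X=I$, $$w(AB)\le\frac12\big\||A^*|^2+|B|^2\big\|-\lim_{n\to\infty}\frac{\|A^*x_n\|}{4\|Bx_n\|}\inf_{\lambda\in\mathbb C}\|(B-\lambda A^* )x_n\|^2\le\frac12\big\||A^*|^2+|B|^2\big\|,$$ where now $\{x_n\}$ is a sequence of unit vectors with $w(AB)=\lim_n|\langle ABx_n,x_n\rangle|$.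
   Context: $|S|=(S^*S)^{1/2}$ for $S\in\mathcal B(\mathcal H)$; $\|\cdot\|$ is the operator norm; $w(S)=\sup\{|\langle Sx,x\rangle|:\|x\|=1\}$ is the numerical radius. *)

theory Defs
  imports "HOL-Analysis.Analysis"
begin

text \<open>Complex vector spaces, complex inner product spaces and complex Hilbert spaces
  (not available in the distribution libraries). Inner product linear in the first argument.\<close>

class complex_vector = real_vector +
  fixes scaleC :: "complex \<Rightarrow> 'a \<Rightarrow> 'a" (infixr \<open>*\<^sub>C\<close> 75)
  assumes scaleC_add_right: "a *\<^sub>C (x + y) = a *\<^sub>C x + a *\<^sub>C y"
    and scaleC_add_left: "(a + b) *\<^sub>C x = a *\<^sub>C x + b *\<^sub>C x"
    and scaleC_scaleC: "a *\<^sub>C (b *\<^sub>C x) = (a * b) *\<^sub>C x"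
    and scaleC_one: "1 *\<^sub>C x = x"
    and scaleR_scaleC: "scaleR r x = complex_of_real r *\<^sub>C x"

class complex_normed_vector = complex_vector + real_normed_vector +
  assumes norm_scaleC: "norm (a *\<^sub>C x) = cmod a * norm x"

class complex_inner = complex_normed_vector +
  fixes cinner :: "'a \<Rightarrow> 'a \<Rightarrow> complex"
  assumes cinner_conj: "cinner x y = cnj (cinner y x)"
    and cinner_add_left: "cinner (x + y) z = cinner x z + cinner y z"
    and cinner_scaleC_left: "cinner (a *\<^sub>C x) y = a * cinner x y"
    and cinner_self_real: "Im (cinner x x) = 0"
    and cinner_self_nonneg: "0 \<le> Re (cinner x x)"
    and cinner_self_eq_zero: "cinner x x = 0 \<longleftrightarrow> x = 0"
    and norm_eq_sqrt_cinner: "norm x = sqrt (Re (cinner x x))"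

class chilbert_space = complex_inner + complete_space

definition bounded_clinear_op :: "('a::complex_normed_vector \<Rightarrow> 'a) \<Rightarrow> bool" where
  "bounded_clinear_op T \<longleftrightarrow>
     (\<forall>x y. T (x + y) = T x + T y) \<and> (\<forall>c x. T (c *\<^sub>C x) = c *\<^sub>C T x) \<and>
     (\<exists>K. \<forall>x. norm (T x) \<le> K * norm x)"

definition is_adjoint :: "('a::complex_inner \<Rightarrow> 'a) \<Rightarrow> ('a \<Rightarrow> 'a) \<Rightarrow> bool" where
  "is_adjoint T Td \<longleftrightarrow> (\<forall>x y. cinner (T x) y = cinner x (Td y))"

definition positive_op :: "('a::complex_inner \<Rightarrow> 'a) \<Rightarrow> bool" where
  "positive_op X \<longleftrightarrow> (\<forall>x. Im (cinner (X x) x) = 0 \<and> 0 \<le> Re (cinner (X x) x))"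

definition numerical_radius :: "('a::complex_inner \<Rightarrow> 'a) \<Rightarrow> real" where
  "numerical_radius T = (SUP x\<in>{x. norm x = 1}. cmod (cinner (T x) x))"

end

theory Submission imports Defs begin

lemma cinner_add_right: "cinner x (y + z) = cinner x y + cinner x z"
  by (metis cinner_conj cinner_add_left complex_cnj_add)
lemma cinner_scaleC_right: "cinner x (a *\<^sub>C y) = cnj a * cinner x y"
  by (metis cinner_conj cinner_scaleC_left complex_cnj_mult)
lemma cinner_diff_left: "cinner (x - y) z = cinner x z - cinner y z"
  using cinner_add_left[of "x - y" y z] by simp
lemma cinner_diff_right: "cinner x (y - z) = cinner x y - cinner x z"
  using cinner_add_right[of x "y - z" z] by simp
lemma cinner_zero_right: "cinner x 0 = 0"
  using cinner_add_right[of x 0 0] by simp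
lemma cinner_self: "cinner x x = complex_of_real ((norm x)^2)"
  by (simp add: complex_eqI cinner_self_real cinner_self_nonneg norm_eq_sqrt_cinner)
lemma norm_sq_Re: "(norm x)^2 = Re (cinner x x)"
  by (simp add: cinner_self)

lemma ring_aux: "(N::complex) \<noteq> 0 \<Longrightarrow> x - d/N * c - c/N * d + c/N*(d/N)*N = x - c*d/N"
  by (simp add: field_simps)

lemma proj:
  fixes x y :: "'a::complex_inner"
  assumes "y \<noteq> 0"
  shows "(norm (x - (cinner x y / cinner y y) *\<^sub>C y))^2 = (norm x)^2 - (cmod (cinner x y))^2 / (norm y)^2"
proof -
  define c where "c = cinner x y"
  define n where "n = norm y"
  define N where "N = complex_of_real (n^2)"
  define l where "l = c / N"
  have n0: "N \<noteq> 0" using assms by (simp add: n_def N_def)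
  have yy: "cinner y y = N" by (simp add: cinner_self n_def N_def)
  have yx: "cinner y x = cnj c" by (simp add: c_def cinner_conj[of y x])
  have cc: "c * cnj c = complex_of_real ((cmod c)^2)" by (metis complex_norm_square of_real_power)
  have cl: "cnj l = cnj c / N" by (simp add: l_def N_def)
  have "cinner (x - l *\<^sub>C y) (x - l *\<^sub>C y) = cinner x x - cnj l * c - l * cnj c + l * cnj l * N"
    by (simp add: cinner_diff_left cinner_diff_right cinner_scaleC_left cinner_scaleC_right yy yx c_def[symmetric]) (simp add: algebra_simps)
  also have "\<dots> = cinner x x - cnj c / N * c - c / N * cnj c + c / N * (cnj c / N) * N"
    by (simp only: cl, simp only: l_def)
  also have "\<dots> = cinner x x - c * cnj c / N"
    by (rule ring_aux[OF n0])
  also have "\<dots> = complex_of_real ((norm x)^2 - (cmod c)^2 / n^2)"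
    by (simp add: cc cinner_self N_def)
  finally have "Re (cinner (x - l *\<^sub>C y) (x - l *\<^sub>C y)) = (norm x)^2 - (cmod c)^2 / n^2"
    by simp
  moreover have "l = cinner x y / cinner y y" by (simp add: l_def yy c_def)
  ultimately show ?thesis
    by (simp add: norm_sq_Re c_def n_def)
qed

lemma cs: "cmod (cinner x y) \<le> norm x * norm y"
proof (cases "y = 0")
  case True thus ?thesis by (simp add: cinner_zero_right)
next
  case False
  have p: "0 < (norm y)^2" using False by simp
  have "(cmod (cinner x y))^2 / (norm y)^2 \<le> (norm x)^2"
    using proj[OF False, of x] zero_le_power2[of "norm (x - (cinner x y / cinner y y) *\<^sub>C y)"] by linarith
  hence "(cmod (cinner x y))^2 \<le> (norm x)^2 * (norm y)^2"
    by (simp only: pos_divide_le_eq[OF p])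
  hence "(cmod (cinner x y))^2 \<le> (norm x * norm y)^2"
    by (simp only: power_mult_distrib)
  thus ?thesis by (rule power2_le_imp_le) simp
qed

lemma norm_add_sq: "(norm (x + y))^2 = (norm x)^2 + (norm y)^2 + 2 * Re (cinner x y)"
proof -
  have "Re (cinner y x) = Re (cinner x y)" by (subst cinner_conj) simp
  thus ?thesis by (simp add: norm_sq_Re cinner_add_left cinner_add_right)
qed


lemma orth0: "(\<And>z. cinner z w = 0) \<Longrightarrow> w = 0"
  using cinner_self_eq_zero by blast

lemma bclin_bl: "bounded_clinear_op T \<Longrightarrow> bounded_linear T"
proof -
  assume T: "bounded_clinear_op T"
  then obtain K where K: "\<And>x. norm (T x) \<le> K * norm x" unfolding bounded_clinear_op_def by blast
  show ?thesis
  proof (rule bounded_linear_intro[where K=K])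
    show "\<And>x y. T (x + y) = T x + T y" using T unfolding bounded_clinear_op_def by blast
    show "\<And>r x. T (scaleR r x) = scaleR r (T x)" using T unfolding bounded_clinear_op_def by (simp add: scaleR_scaleC)
    show "\<And>x. norm (T x) \<le> norm x * K" using K by (simp add: mult.commute)
  qed
qed

lemma adj_bl:
  assumes T: "bounded_clinear_op T" and adj: "is_adjoint T Td"
  shows "bounded_linear Td"
proof -
  from T obtain K where K: "\<And>x. norm (T x) \<le> K * norm x" unfolding bounded_clinear_op_def by blast
  have ad: "\<And>z y. cinner (T z) y = cinner z (Td y)" using adj unfolding is_adjoint_def by blast
  have Tadd: "\<And>x y. T (x + y) = T x + T y" and Tsc: "\<And>c x. T (c *\<^sub>C x) = c *\<^sub>C T x"
    using T unfolding bounded_clinear_op_def by blast+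
  show ?thesis
  proof (rule bounded_linear_intro[where K="max K 0"])
    fix x y
    show "Td (x + y) = Td x + Td y"
    proof -
      have "Td (x + y) - (Td x + Td y) = 0"
        by (rule orth0) (simp add: cinner_diff_right cinner_add_right ad[symmetric])
      thus ?thesis by simp
    qed
  next
    fix r x
    show "Td (scaleR r x) = scaleR r (Td x)"
    proof -
      have "Td (scaleR r x) - scaleR r (Td x) = 0"
        by (rule orth0) (simp add: scaleR_scaleC cinner_diff_right cinner_scaleC_right ad[symmetric])
      thus ?thesis by simp
    qed
  next
    fix y
    have "(norm (Td y))^2 = Re (cinner (T (Td y)) y)" by (simp add: norm_sq_Re ad)
    also have "\<dots> \<le> cmod (cinner (T (Td y)) y)" by (rule complex_Re_le_cmod)
    also have "\<dots> \<le> norm (T (Td y)) * norm y" by (rule cs)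
    also have "\<dots> \<le> max K 0 * norm (Td y) * norm y"
    proof -
      have "norm (T (Td y)) \<le> max K 0 * norm (Td y)"
        using K[of "Td y"] by (metis max.cobounded1 mult_right_mono norm_ge_zero order_trans)
      thus ?thesis by (simp add: mult_right_mono)
    qed
    finally have h: "(norm (Td y))^2 \<le> max K 0 * norm (Td y) * norm y" .
    show "norm (Td y) \<le> norm y * max K 0"
    proof (cases "norm (Td y) = 0")
      case True thus ?thesis by simp
    next
      case False
      hence "norm (Td y) * norm (Td y) \<le> norm (Td y) * (max K 0 * norm y)"
        using h by (simp add: power2_eq_square mult.commute mult.left_commute)
      thus ?thesis using False by (simp add: mult.commute)
    qed
  qed
qed

lemma polar:
  assumes "\<forall>x y. X (x + y) = X x + X y"
  shows "cinner (X (u+w)) (u+w) - cinner (X (u-w)) (u-w) = 2 * (cinner (X u) w + cinner (X w) u)"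
proof -
  have d: "X (u - w) = X u - X w" using assms by (metis add_diff_cancel_right' diff_add_cancel)
  show ?thesis using assms
    by (simp add: d cinner_add_left cinner_add_right cinner_diff_left cinner_diff_right)
qed

lemma aux4: "(a::real) - b = 2*(r+s) \<Longrightarrow> s = r \<Longrightarrow> 0 \<le> b \<Longrightarrow> 4*r \<le> a" by auto

lemma posX:
  assumes X: "bounded_clinear_op X" and P: "positive_op X" and K: "\<And>z. norm (X z) \<le> K * norm z"
  shows "4 * Re (cinner (X u) w) \<le> K * (norm (u+w))^2"
proof -
  have Xadd: "\<forall>x y. X (x + y) = X x + X y" and Xsc: "\<And>c x. X (c *\<^sub>C x) = c *\<^sub>C X x"
    using X unfolding bounded_clinear_op_def by blast+
  have Q: "\<And>z. Im (cinner (X z) z) = 0 \<and> 0 \<le> Re (cinner (X z) z)" using P unfolding positive_op_def by blast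
  note P1 = polar[OF Xadd, of u w]
  note P2 = polar[OF Xadd, of u "\<i> *\<^sub>C w"]
  have "Im (cinner (X (u + \<i> *\<^sub>C w)) (u + \<i> *\<^sub>C w) - cinner (X (u - \<i> *\<^sub>C w)) (u - \<i> *\<^sub>C w)) = 0"
    using Q by simp
  hence e1: "Re (cinner (X w) u) = Re (cinner (X u) w)"
    unfolding P2 by (simp add: Xsc cinner_scaleC_left cinner_scaleC_right)
  have e2: "Re (cinner (X (u+w)) (u+w)) - Re (cinner (X (u-w)) (u-w)) = 2 * (Re (cinner (X u) w) + Re (cinner (X w) u))"
    using arg_cong[OF P1, of Re] by simp
  have "4 * Re (cinner (X u) w) \<le> Re (cinner (X (u+w)) (u+w))"
    by (rule aux4[OF e2 e1 conjunct2[OF Q[of "u-w"]]])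
  also have "\<dots> \<le> cmod (cinner (X (u+w)) (u+w))" by (rule complex_Re_le_cmod)
  also have "\<dots> \<le> norm (X (u+w)) * norm (u+w)" by (rule cs)
  also have "\<dots> \<le> K * norm (u+w) * norm (u+w)" by (simp add: K mult_right_mono)
  finally show ?thesis by (simp add: power2_eq_square mult.assoc)
qed


lemma INF_nonneg: "0 \<le> (INF l::complex. (norm (u - l *\<^sub>C v))^2)"
  by (rule cINF_greatest) auto

lemma INF_le: "(INF l::complex. (norm (u - l *\<^sub>C v))^2) \<le> (norm (u - m *\<^sub>C v))^2"
  by (rule cINF_lower) (auto intro: bdd_belowI[where m=0])

lemma sgn_aux: "cnj (sgn z) * z = complex_of_real (cmod z)"
proof (cases "z = 0")
  case True thus ?thesis by simp
next
  case False
  have e: "cnj z * z = complex_of_real ((cmod z)^2)" by (metis complex_norm_square mult.commute of_real_power)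
  have "cnj (sgn z) * z = cnj z * z / complex_of_real (cmod z)" by (simp add: sgn_eq)
  also have "\<dots> = complex_of_real (cmod z)" using False by (simp add: e power2_eq_square)
  finally show ?thesis .
qed

lemma lin2: "2*m \<le> S \<Longrightarrow> 2*p - m \<le> r \<Longrightarrow> S \<le> N \<Longrightarrow> (S + 2*p)/4 \<le> N/2 - (m/4 - r/4)" for m S p r N :: real
  by (simp add: field_simps)

lemma final_ineq:
  fixes a b p N :: real
  assumes "0 \<le> a" "0 \<le> b" "0 \<le> p" "p \<le> a * b" "a^2 + b^2 \<le> N"
  shows "(a^2 + b^2 + 2*p)/4 \<le> N/2 - (a*b/4 - p^2/(4*a*b))"
proof (cases "a * b = 0")
  case True
  hence "p \<le> 0" using assms(4) by (metis mult_eq_0_iff)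
  hence "p = 0" using assms(3) by simp
  hence e: "a*b/4 - p^2/(4*a*b) = 0" using True by simp
  have "0 \<le> a^2 + b^2" by simp
  hence "a^2*2 + b^2*2 \<le> N*4" using assms(5) by linarith
  thus ?thesis unfolding e using \<open>p = 0\<close> by simp
next
  case False
  hence ab: "0 < a * b" using assms by (simp add: less_le)
  define m where "m = a * b"
  have m0: "0 < m" using ab by (simp add: m_def)
  have "0 \<le> (m - p)^2" by simp
  hence "(2*p - m)*m \<le> p^2" by (simp add: power2_eq_square algebra_simps)
  hence q0: "2*p - m \<le> p^2/m" by (simp add: pos_le_divide_eq[OF m0])
  hence q: "2*p - a*b \<le> p^2/(a*b)" by (simp add: m_def)
  have r: "p^2/(4*a*b) = (p^2/(a*b))/4" by simp
  have "0 \<le> (a - b)^2" by simp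
  hence "2*a*b \<le> a^2 + b^2" by (simp add: power2_eq_square algebra_simps)
  hence m2: "2 * (a * b) \<le> a^2 + b^2" by simp
  show ?thesis unfolding r by (rule lin2[OF m2 q assms(5)])
qed

lemma core:
  fixes A B X Ad :: "'a::complex_inner \<Rightarrow> 'a"
  assumes X: "bounded_clinear_op X" and P: "positive_op X" and K: "\<And>z. norm (X z) \<le> K * norm z"
    and K0: "0 \<le> K" and adA: "is_adjoint A Ad"
    and N: "(norm (Ad x))^2 + (norm (B x))^2 \<le> N"
  shows "cmod (cinner (A (X (B x))) x)
     \<le> K * (N/2 - norm (Ad x) / (4 * norm (B x)) * (INF l::complex. (norm (B x - l *\<^sub>C Ad x))^2))"
proof -
  define u where "u = B x"
  define v where "v = Ad x"
  define a where "a = norm v"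
  define b where "b = norm u"
  define p where "p = cmod (cinner u v)"
  define I where "I = (INF l::complex. (norm (u - l *\<^sub>C v))^2)"
  define z where "z = cinner (X u) v"
  define s where "s = sgn z"
  have zz: "cinner (A (X (B x))) x = z" using adA by (simp add: is_adjoint_def z_def u_def v_def)
  have s1: "cmod s \<le> 1" by (simp add: s_def norm_sgn)
  have "Re (cinner (X u) (s *\<^sub>C v)) = cmod z"
    using sgn_aux[of z] by (simp add: cinner_scaleC_right z_def[symmetric] s_def)
  hence c1: "4 * cmod z \<le> K * (norm (u + s *\<^sub>C v))^2" using posX[OF X P K, of u "s *\<^sub>C v"] by simp
  have e: "(norm (u + s *\<^sub>C v))^2 = b^2 + (cmod s * a)^2 + 2 * Re (cinner u (s *\<^sub>C v))"
    by (simp add: norm_add_sq norm_scaleC a_def b_def)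
  have "Re (cinner u (s *\<^sub>C v)) \<le> cmod (cinner u (s *\<^sub>C v))" by (rule complex_Re_le_cmod)
  also have "\<dots> = cmod s * p" by (simp add: cinner_scaleC_right p_def norm_mult)
  also have "\<dots> \<le> p" using s1 by (simp add: p_def mult_left_le_one_le)
  finally have c2: "Re (cinner u (s *\<^sub>C v)) \<le> p" .
  have "cmod s * a \<le> a" using s1 by (simp add: a_def mult_left_le_one_le)
  hence c3: "(cmod s * a)^2 \<le> a^2" by (rule power_mono) (simp add: a_def)
  have "(norm (u + s *\<^sub>C v))^2 \<le> a^2 + b^2 + 2*p" using e c2 c3 by linarith
  hence "K * (norm (u + s *\<^sub>C v))^2 \<le> K * (a^2 + b^2 + 2*p)" using K0 by (rule mult_left_mono)
  hence cz: "cmod z \<le> K * ((a^2 + b^2 + 2*p)/4)" using c1 by simp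
  have pab: "p \<le> a * b" unfolding p_def a_def b_def using cs[of u v] by (simp add: mult.commute)
  have T: "a/(4*b) * I \<le> a*b/4 - p^2/(4*a*b)"
  proof (cases "a = 0 \<or> b = 0")
    case True thus ?thesis by auto
  next
    case False
    hence v0: "v \<noteq> 0" and a0: "0 < a" and b0: "0 < b" by (auto simp: a_def b_def)
    have "I \<le> b^2 - p^2/a^2"
      using INF_le[of u v "cinner u v / cinner v v"] proj[OF v0, of u] by (simp add: I_def a_def b_def p_def)
    hence "a/(4*b) * I \<le> a/(4*b) * (b^2 - p^2/a^2)" by (rule mult_left_mono) (use a0 b0 in simp)
    also have "\<dots> = a*b/4 - p^2/(4*a*b)" using a0 b0 by (simp add: field_simps power2_eq_square)
    finally show ?thesis .
  qed
  have "(a^2 + b^2 + 2*p)/4 \<le> N/2 - (a*b/4 - p^2/(4*a*b))"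
    by (rule final_ineq) (use pab N in \<open>auto simp: a_def b_def p_def u_def v_def\<close>)
  also have "\<dots> \<le> N/2 - a/(4*b) * I" using T by linarith
  finally have "K * ((a^2 + b^2 + 2*p)/4) \<le> K * (N/2 - a/(4*b) * I)" using K0 by (rule mult_left_mono)
  with cz zz show ?thesis by (simp add: a_def b_def I_def u_def v_def)
qed

lemma Nbound:
  assumes A: "bounded_clinear_op A" and B: "bounded_clinear_op B"
    and adA: "is_adjoint A Ad" and adB: "is_adjoint B Bd" and x: "norm x = 1"
  shows "(norm (Ad x))^2 + (norm (B x))^2 \<le> onorm (\<lambda>v. A (Ad v) + Bd (B v))"
proof -
  have blA: "bounded_linear A" and blB: "bounded_linear B" using A B by (auto intro: bclin_bl)
  have blAd: "bounded_linear Ad" and blBd: "bounded_linear Bd" using A B adA adB by (auto intro: adj_bl)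
  have bl: "bounded_linear (\<lambda>v. A (Ad v) + Bd (B v))"
    by (intro bounded_linear_add bounded_linear_compose[OF blA blAd] bounded_linear_compose[OF blBd blB])
  have "(norm (Ad x))^2 = Re (cinner (A (Ad x)) x)" using adA by (simp add: norm_sq_Re is_adjoint_def)
  moreover have "(norm (B x))^2 = Re (cinner (Bd (B x)) x)"
  proof -
    have "cinner (B x) (B x) = cinner x (Bd (B x))" using adB by (simp add: is_adjoint_def)
    also have "\<dots> = cnj (cinner (Bd (B x)) x)" by (rule cinner_conj)
    finally show ?thesis by (simp add: norm_sq_Re)
  qed
  ultimately have "(norm (Ad x))^2 + (norm (B x))^2 = Re (cinner (A (Ad x) + Bd (B x)) x)"
    by (simp add: cinner_add_left)
  also have "\<dots> \<le> cmod (cinner (A (Ad x) + Bd (B x)) x)" by (rule complex_Re_le_cmod)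
  also have "\<dots> \<le> norm (A (Ad x) + Bd (B x)) * norm x" by (rule cs)
  also have "\<dots> \<le> onorm (\<lambda>v. A (Ad v) + Bd (B v)) * norm x" using onorm[OF bl, of x] x by simp
  finally show ?thesis using x by simp
qed

lemma resc: "K/2 * (N - a/(2*b) * I) = K * (N/2 - a/(4*b) * (I::real))"
  by (cases "b = 0") (simp_all add: field_simps)

theorem theorem2p15:
  fixes A B X Ad Bd :: "'a::chilbert_space \<Rightarrow> 'a" and x :: "nat \<Rightarrow> 'a" and L :: real
  assumes "bounded_clinear_op A" "bounded_clinear_op B" "bounded_clinear_op X"
    and "is_adjoint A Ad" "is_adjoint B Bd"
    and "B \<noteq> (\<lambda>_. 0)" and "positive_op X"
    and "\<forall>n. norm (x n) = 1"
    and "(\<lambda>n. cmod (cinner (A (X (B (x n)))) (x n))) \<longlonglongrightarrow> numerical_radius (A \<circ> X \<circ> B)"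
    and "(\<lambda>n. norm (Ad (x n)) / (2 * norm (B (x n)))
              * (INF l::complex. (norm (B (x n) - l *\<^sub>C Ad (x n)))^2)) \<longlonglongrightarrow> L"
  shows "numerical_radius (A \<circ> X \<circ> B)
           \<le> onorm X / 2 * (onorm (\<lambda>v. A (Ad v) + Bd (B v)) - L)
       \<and> onorm X / 2 * (onorm (\<lambda>v. A (Ad v) + Bd (B v)) - L)
           \<le> onorm X / 2 * onorm (\<lambda>v. A (Ad v) + Bd (B v))
       \<and> (\<forall>(y :: nat \<Rightarrow> 'a) (L' :: real).
            (\<forall>n. norm (y n) = 1)
            \<and> (\<lambda>n. cmod (cinner (A (B (y n))) (y n))) \<longlonglongrightarrow> numerical_radius (A \<circ> B)
            \<and> (\<lambda>n. norm (Ad (y n)) / (4 * norm (B (y n)))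
                   * (INF l::complex. (norm (B (y n) - l *\<^sub>C Ad (y n)))^2)) \<longlonglongrightarrow> L'
            \<longrightarrow> numerical_radius (A \<circ> B) \<le> 1 / 2 * onorm (\<lambda>v. A (Ad v) + Bd (B v)) - L'
              \<and> 1 / 2 * onorm (\<lambda>v. A (Ad v) + Bd (B v)) - L'
                  \<le> 1 / 2 * onorm (\<lambda>v. A (Ad v) + Bd (B v)))"
proof -
  note asm = assms
  have blX: "bounded_linear X" using assms(3) by (rule bclin_bl)
  define N where "N = onorm (\<lambda>v. A (Ad v) + Bd (B v))"
  have KX: "\<And>z. norm (X z) \<le> onorm X * norm z" using onorm[OF blX] by simp
  have K0: "0 \<le> onorm X" by (rule onorm_pos_le[OF blX])
  have Nb: "\<And>y. norm y = 1 \<Longrightarrow> (norm (Ad y))^2 + (norm (B y))^2 \<le> N"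
    unfolding N_def by (rule Nbound[OF assms(1,2,4,5)])
  have N0: "0 \<le> N"
  proof -
    have "0 \<le> (norm (Ad (x 0)))^2 + (norm (B (x 0)))^2" by simp
    also have "\<dots> \<le> N" using Nb assms(8) by blast
    finally show ?thesis .
  qed
  have pw: "\<And>n. cmod (cinner (A (X (B (x n)))) (x n)) \<le> onorm X / 2 * (N - norm (Ad (x n)) / (2 * norm (B (x n)))
              * (INF l::complex. (norm (B (x n) - l *\<^sub>C Ad (x n)))^2))"
    unfolding resc by (rule core[where X=X and K="onorm X" and A=A and Ad=Ad and B=B and N=N, OF assms(3) assms(7) KX K0 assms(4) Nb[OF asm(8)[rule_format]]])
  have part1: "numerical_radius (A \<circ> X \<circ> B) \<le> onorm X / 2 * (N - L)"
  proof (rule tendsto_le[OF trivial_limit_sequentially _ assms(9)])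
    show "((\<lambda>n. onorm X / 2 * (N - norm (Ad (x n)) / (2 * norm (B (x n)))
              * (INF l::complex. (norm (B (x n) - l *\<^sub>C Ad (x n)))^2))) \<longlonglongrightarrow> onorm X / 2 * (N - L))"
      by (intro tendsto_intros assms(10))
  qed (rule always_eventually, rule allI, rule pw)
  have L0: "0 \<le> L"
    by (rule tendsto_lowerbound[OF assms(10)]) (rule always_eventually, rule allI, rule mult_nonneg_nonneg, simp, rule INF_nonneg, rule trivial_limit_sequentially)
  have part2: "onorm X / 2 * (N - L) \<le> onorm X / 2 * N"
    using K0 L0 by (simp add: mult_left_mono)
  have idc: "bounded_clinear_op (id :: 'a \<Rightarrow> 'a)"
    unfolding bounded_clinear_op_def by (auto intro!: exI[of _ 1])
  have idp: "positive_op (id :: 'a \<Rightarrow> 'a)"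
    unfolding positive_op_def by (simp add: cinner_self_real cinner_self_nonneg)
  have part3: "numerical_radius (A \<circ> B) \<le> 1 / 2 * N - L' \<and> 1 / 2 * N - L' \<le> 1 / 2 * N"
    if y1: "\<forall>n. norm (y n) = 1"
      and ylim: "(\<lambda>n. cmod (cinner (A (B (y n))) (y n))) \<longlonglongrightarrow> numerical_radius (A \<circ> B)"
      and L'lim: "(\<lambda>n. norm (Ad (y n)) / (4 * norm (B (y n)))
                   * (INF l::complex. (norm (B (y n) - l *\<^sub>C Ad (y n)))^2)) \<longlonglongrightarrow> L'"
    for y :: "nat \<Rightarrow> 'a" and L' :: real
  proof -
    have pw': "\<And>n. cmod (cinner (A (B (y n))) (y n)) \<le> 1 / 2 * N - norm (Ad (y n)) / (4 * norm (B (y n)))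
              * (INF l::complex. (norm (B (y n) - l *\<^sub>C Ad (y n)))^2)"
      using core[where X=id and K=1 and A=A and Ad=Ad and B=B and N=N, OF idc idp _ _ assms(4) Nb[OF y1[rule_format]]] by simp
    have "numerical_radius (A \<circ> B) \<le> 1 / 2 * N - L'"
    proof (rule tendsto_le[OF trivial_limit_sequentially _ ylim])
      show "((\<lambda>n. 1 / 2 * N - norm (Ad (y n)) / (4 * norm (B (y n)))
              * (INF l::complex. (norm (B (y n) - l *\<^sub>C Ad (y n)))^2)) \<longlonglongrightarrow> 1 / 2 * N - L')"
        by (intro tendsto_intros L'lim)
    qed (rule always_eventually, rule allI, rule pw')
    moreover have "0 \<le> L'"
      by (rule tendsto_lowerbound[OF L'lim]) (rule always_eventually, rule allI, rule mult_nonneg_nonneg, simp, rule INF_nonneg, rule trivial_limit_sequentially)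
    ultimately show ?thesis by simp
  qed
  show ?thesis using part1 part2 part3 unfolding N_def by blast
qed

end
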